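(* Let $A$ be a finite ring with unity (not necessarily associative or commutative), let $E$ be a set, and consider the ring $A^E$ with pointwise operations. For $X\subseteq A^E$ set $\mathcal{R}(X)=X\cup\{-1,0,1\}\cup\{x+y : x,y\in X\}\cup\{xy : x,y\in X\}$. Let $(\mathscr{X}_i)_{i\in\mathbf{N}}$ be an increasing sequence of subsets of $A^E$ such that $\mathcal{R}(\mathscr{X}_i)\subseteq\mathscr{X}_{i+1}$ for all $i$ and $\bigcup_{i\in\mathbf{N}}\mathscr{X}_i=A^E$. Then $A^E=\mathscr{X}_i$ for some $i$. *)

theory Defs
  imports Main
begin

definition nonassoc_ring_1 :: "'a::{ab_group_add, times, one} itself \<Rightarrow> bool" where
  "nonassoc_ring_1 _ \<longleftrightarrow>
     (\<forall>x y z::'a. x * (y + z) = x * y + x * z) \<and>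
     (\<forall>x y z::'a. (x + y) * z = x * z + y * z) \<and>
     (\<forall>x::'a. 1 * x = x \<and> x * 1 = x)"

definition Rop :: "('e \<Rightarrow> 'a::{ab_group_add, times, one}) set \<Rightarrow> ('e \<Rightarrow> 'a) set" where
  "Rop X = X \<union> {(\<lambda>e. - 1), (\<lambda>e. 0), (\<lambda>e. 1)}
           \<union> {(\<lambda>e. x e + y e) | x y. x \<in> X \<and> y \<in> X}
           \<union> {(\<lambda>e. x e * y e) | x y. x \<in> X \<and> y \<in> X}"

end

theory Submission
  imports Defs
begin

locale chn =
  fixes Xs :: "nat \<Rightarrow> ('e \<Rightarrow> 'a::{ab_group_add, times, one, finite}) set"
  assumes ring: "nonassoc_ring_1 TYPE('a)"
    and stp: "\<And>i. Xs i \<subseteq> Xs (Suc i)"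
    and rop: "\<And>i. Rop (Xs i) \<subseteq> Xs (Suc i)"
    and cover: "(\<Union>i. Xs i) = UNIV"
begin

lemma mul1: "(x::'a) * 1 = x" "1 * (x::'a) = x"
  using ring unfolding nonassoc_ring_1_def by auto

lemma mul0: "(x::'a) * 0 = 0"
proof -
  have "x * (0 + 0) = x * 0 + x * 0" using ring unfolding nonassoc_ring_1_def by blast
  then have "x * 0 = x * 0 + x * 0" by simp
  then show ?thesis by simp
qed

lemma mono: "n \<le> m \<Longrightarrow> Xs n \<subseteq> Xs m"
  by (rule lift_Suc_mono_le[of Xs]) (use stp in auto)

lemma add_mem: "f \<in> Xs n \<Longrightarrow> g \<in> Xs m \<Longrightarrow> n \<le> k \<Longrightarrow> m \<le> k \<Longrightarrow> (\<lambda>e. f e + g e) \<in> Xs (Suc k)"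
proof -
  assume a: "f \<in> Xs n" "g \<in> Xs m" "n \<le> k" "m \<le> k"
  then have "f \<in> Xs k" "g \<in> Xs k" using mono by blast+
  then show ?thesis using rop[of k] unfolding Rop_def by blast
qed

lemma mul_mem: "f \<in> Xs n \<Longrightarrow> g \<in> Xs m \<Longrightarrow> n \<le> k \<Longrightarrow> m \<le> k \<Longrightarrow> (\<lambda>e. f e * g e) \<in> Xs (Suc k)"
proof -
  assume a: "f \<in> Xs n" "g \<in> Xs m" "n \<le> k" "m \<le> k"
  then have "f \<in> Xs k" "g \<in> Xs k" using mono by blast+
  then show ?thesis using rop[of k] unfolding Rop_def by blast
qed

lemma cst: "(\<lambda>e. - 1) \<in> Xs (Suc n)" "(\<lambda>e. 0) \<in> Xs (Suc n)"
  using rop[of n] unfolding Rop_def by blast+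

definition idx :: "('e \<Rightarrow> 'a) \<Rightarrow> nat" where "idx f = (SOME n. f \<in> Xs n)"

lemma idx_mem: "f \<in> Xs (idx f)"
proof -
  have "\<exists>n. f \<in> Xs n" using cover by blast
  then show ?thesis unfolding idx_def by (rule someI_ex)
qed

definition fullX :: "nat \<Rightarrow> 'e set \<Rightarrow> bool" where
  "fullX n T \<longleftrightarrow> (\<forall>f. (\<forall>e. e \<notin> T \<longrightarrow> f e = 0) \<longrightarrow> f \<in> Xs n)"

definition bndX :: "'e set \<Rightarrow> bool" where "bndX T \<longleftrightarrow> (\<exists>n. fullX n T)"

definition restr :: "('e \<Rightarrow> 'a) \<Rightarrow> 'e set \<Rightarrow> 'e \<Rightarrow> 'a" where
  "restr f T = (\<lambda>e. if e \<in> T then f e else 0)"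

definition chi :: "'e set \<Rightarrow> 'e \<Rightarrow> 'a" where
  "chi T = (\<lambda>e. if e \<in> T then 1 else 0)"

lemma restr_mul: "restr f T = (\<lambda>e. f e * chi T e)"
  by (auto simp: restr_def chi_def mul0 mul1 fun_eq_iff)

lemma full_sub: "fullX n T \<Longrightarrow> S \<subseteq> T \<Longrightarrow> fullX n S"
  unfolding fullX_def by blast

lemma full_le: "fullX n T \<Longrightarrow> n \<le> m \<Longrightarrow> fullX m T"
  unfolding fullX_def using mono by blast

lemma full_mem: "fullX n T \<Longrightarrow> restr f T \<in> Xs n"
  unfolding fullX_def restr_def by auto

lemma full_chi: "fullX n T \<Longrightarrow> chi T \<in> Xs n"
  unfolding fullX_def chi_def by auto

lemma full_union: "fullX n T1 \<Longrightarrow> fullX m T2 \<Longrightarrow> fullX (Suc (max n m)) (T1 \<union> T2)"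
  unfolding fullX_def
proof (intro allI impI)
  fix f :: "'e \<Rightarrow> 'a"
  assume f1: "\<forall>f. (\<forall>e. e \<notin> T1 \<longrightarrow> f e = 0) \<longrightarrow> f \<in> Xs n"
    and f2: "\<forall>f. (\<forall>e. e \<notin> T2 \<longrightarrow> f e = 0) \<longrightarrow> f \<in> Xs m"
    and s: "\<forall>e. e \<notin> T1 \<union> T2 \<longrightarrow> f e = 0"
  have a: "restr f T1 \<in> Xs n" using f1 by (auto simp: restr_def)
  have b: "restr f (T2 - T1) \<in> Xs m" using f2 by (auto simp: restr_def)
  have "f = (\<lambda>e. restr f T1 e + restr f (T2 - T1) e)"
    using s by (auto simp: restr_def fun_eq_iff)
  then show "f \<in> Xs (Suc (max n m))" using add_mem[OF a b] by simp
qed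

lemma bnd_union: "bndX A \<Longrightarrow> bndX B \<Longrightarrow> bndX (A \<union> B)"
  unfolding bndX_def using full_union by blast

lemma bnd_sub: "bndX T \<Longrightarrow> S \<subseteq> T \<Longrightarrow> bndX S"
  unfolding bndX_def using full_sub by blast

lemma bnd_empty: "bndX {}"
proof -
  have "fullX (Suc 0) {}" unfolding fullX_def
  proof (intro allI impI)
    fix f :: "'e \<Rightarrow> 'a" assume "\<forall>e. e \<notin> {} \<longrightarrow> f e = 0"
    then have "f = (\<lambda>e. 0)" by auto
    then show "f \<in> Xs (Suc 0)" using cst by simp
  qed
  then show ?thesis unfolding bndX_def by blast
qed

lemma bnd_fin_union: "finite I \<Longrightarrow> (\<forall>i\<in>I. bndX (F i)) \<Longrightarrow> bndX (\<Union>i\<in>I. F i)"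
  by (induction I rule: finite_induct) (auto simp: bnd_empty bnd_union)

lemma case2:
  assumes nb: "\<not> bndX UNIV"
    and H: "\<And>T. \<not> bndX T \<Longrightarrow> \<exists>T1\<subseteq>T. \<not> bndX T1 \<and> \<not> bndX (T - T1)"
  shows False
proof -
  define P where "P T = (SOME T1. T1 \<subseteq> T \<and> \<not> bndX T1 \<and> \<not> bndX (T - T1))" for T
  have P: "P T \<subseteq> T \<and> \<not> bndX (P T) \<and> \<not> bndX (T - P T)" if "\<not> bndX T" for T
  proof -
    have "\<exists>T1. T1 \<subseteq> T \<and> \<not> bndX T1 \<and> \<not> bndX (T - T1)" using H[OF that] by blast
    then show ?thesis unfolding P_def by (rule someI_ex)
  qed
  define R where "R = rec_nat UNIV (\<lambda>_ T. T - P T)"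
  have R0: "R 0 = UNIV" and RS: "R (Suc k) = R k - P (R k)" for k unfolding R_def by simp_all
  have Rnb: "\<not> bndX (R k)" for k
    by (induction k) (use nb P in \<open>auto simp: R0 RS\<close>)
  define U where "U k = P (R k)" for k
  have Unb: "\<not> bndX (U k)" and UR: "U k \<subseteq> R k" for k using P[OF Rnb[of k]] unfolding U_def by auto
  have Rdec: "k \<le> j \<Longrightarrow> R j \<subseteq> R k" for j k
    by (rule lift_Suc_antimono_le[of R]) (auto simp: RS)
  have disj: "k < j \<Longrightarrow> U j \<inter> U k = {}" for j k
  proof -
    assume "k < j"
    then have "R j \<subseteq> R (Suc k)" using Rdec by simp
    then show ?thesis using UR[of j] by (auto simp: RS U_def)
  qed
  have uniq: "e \<in> U j \<Longrightarrow> e \<in> U k \<Longrightarrow> j = k" for e j k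
    using disj[of j k] disj[of k j] by (metis disjoint_iff linorder_neqE_nat)
  have "\<forall>k. \<exists>g. (\<forall>e. e \<notin> U k \<longrightarrow> g e = 0) \<and> g \<notin> Xs (Suc (k + idx (chi (U k))))"
    using Unb unfolding bndX_def fullX_def by blast
  then obtain g where g: "\<And>k. (\<forall>e. e \<notin> U k \<longrightarrow> g k e = 0)"
      "\<And>k. g k \<notin> Xs (Suc (k + idx (chi (U k))))"
    by metis
  define G where "G = (\<lambda>e. if \<exists>k. e \<in> U k then g (SOME k. e \<in> U k) e else 0)"
  define m where "m = idx G"
  have eq: "restr G (U m) = g m"
  proof
    fix e show "restr G (U m) e = g m e"
    proof (cases "e \<in> U m")
      case True
      then have "e \<in> U (SOME k. e \<in> U k)" by (rule someI)
      then have "(SOME k. e \<in> U k) = m" using uniq True by blast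
      then show ?thesis using True by (auto simp: restr_def G_def)
    next
      case False then show ?thesis using g(1) by (auto simp: restr_def)
    qed
  qed
  have "(\<lambda>e. G e * chi (U m) e) \<in> Xs (Suc (m + idx (chi (U m))))"
    by (rule mul_mem[OF idx_mem idx_mem]) (auto simp: m_def)
  then show False using g(2)[of m] eq restr_mul by simp
qed

lemma unb:
  assumes Tnb: "\<not> bndX T"
    and Tsplit: "\<And>T1. T1 \<subseteq> T \<Longrightarrow> bndX T1 \<or> bndX (T - T1)"
  shows "\<exists>S\<subseteq>T. bndX S \<and> \<not> fullX M S"
proof (rule ccontr)
  assume "\<not> ?thesis"
  then have HM: "\<And>S. S \<subseteq> T \<Longrightarrow> bndX S \<Longrightarrow> fullX M S" by blast
  define t where "t = idx (chi T)"
  define c where "c = Max (range (\<lambda>a::'a. idx (\<lambda>e::'e. a)))"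
  define K where "K = max (max t M) (max c 1)"
  have "fullX (Suc (Suc (Suc (Suc K)))) T" unfolding fullX_def
  proof (intro allI impI)
    fix f :: "'e \<Rightarrow> 'a"
    assume s: "\<forall>e. e \<notin> T \<longrightarrow> f e = 0"
    define F where "F a = {e\<in>T. f e = a}" for a
    have "T = (\<Union>a\<in>UNIV. F a)" by (auto simp: F_def)
    then obtain a0 where a0: "\<not> bndX (F a0)"
      using bnd_fin_union[of "UNIV::'a set" F] Tnb by auto
    have "F a0 \<subseteq> T" by (auto simp: F_def)
    then have "bndX (T - F a0)" using Tsplit a0 by blast
    then have fm: "fullX M (T - F a0)" using HM by blast
    have r1: "restr f (T - F a0) \<in> Xs M" using full_mem[OF fm] .
    have c1: "chi (T - F a0) \<in> Xs M" using full_chi[OF fm] .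
    have m1: "(\<lambda>e. - 1 * chi (T - F a0) e) \<in> Xs (Suc K)"
      by (rule mul_mem[OF cst(1)[of 0] c1]) (auto simp: K_def)
    have c2: "chi T \<in> Xs t" unfolding t_def by (rule idx_mem)
    have h: "(\<lambda>e. chi T e + - 1 * chi (T - F a0) e) \<in> Xs (Suc (Suc K))"
      by (rule add_mem[OF c2 m1]) (auto simp: K_def)
    have heq: "(\<lambda>e. chi T e + - 1 * chi (T - F a0) e) = chi (F a0)"
      by (auto simp: chi_def F_def fun_eq_iff mul0 mul1)
    have ca: "(\<lambda>e::'e. a0) \<in> Xs (idx (\<lambda>e::'e. a0))" by (rule idx_mem)
    have "idx (\<lambda>e::'e. a0) \<le> c" unfolding c_def by (rule Max_ge) auto
    then have m2': "(\<lambda>e. a0 * (chi T e + - 1 * chi (T - F a0) e)) \<in> Xs (Suc (Suc (Suc K)))"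
      by (intro mul_mem[OF ca h]) (auto simp: K_def)
    then have m2: "(\<lambda>e. a0 * chi (F a0) e) \<in> Xs (Suc (Suc (Suc K)))"
      using heq by (simp add: fun_eq_iff)
    have feq: "f = (\<lambda>e. restr f (T - F a0) e + a0 * chi (F a0) e)"
      using s by (auto simp: restr_def chi_def F_def fun_eq_iff mul0 mul1)
    show "f \<in> Xs (Suc (Suc (Suc (Suc K))))"
      by (subst feq, rule add_mem[OF r1 m2]) (auto simp: K_def)
  qed
  then show False using Tnb unfolding bndX_def by blast
qed

lemma case1:
  assumes Tnb: "\<not> bndX T"
    and Tsplit: "\<And>T1. T1 \<subseteq> T \<Longrightarrow> bndX T1 \<or> bndX (T - T1)"
  shows False
proof -
  define beta where "beta C = (LEAST k. fullX k C)" for C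
  have beta: "bndX C \<Longrightarrow> fullX (beta C) C" for C
    unfolding beta_def bndX_def by (rule LeastI_ex)
  define Sn where "Sn C n = (SOME S. S \<subseteq> T \<and> bndX S \<and> \<not> fullX (beta C + n + 2) S)" for C n
  have Sn: "Sn C n \<subseteq> T \<and> bndX (Sn C n) \<and> \<not> fullX (beta C + n + 2) (Sn C n)" for C n
  proof -
    have "\<exists>S. S \<subseteq> T \<and> bndX S \<and> \<not> fullX (beta C + n + 2) S" using unb[OF Tnb Tsplit] by blast
    then show ?thesis unfolding Sn_def by (rule someI_ex)
  qed
  define C where "C = rec_nat {} (\<lambda>n Cn. Cn \<union> Sn Cn n)"
  have C0: "C 0 = {}" and CS: "C (Suc n) = C n \<union> Sn (C n) n" for n unfolding C_def by simp_all
  have Cb: "C n \<subseteq> T \<and> bndX (C n)" for n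
    by (induction n) (use Sn bnd_union bnd_empty in \<open>auto simp: C0 CS\<close>)
  define D where "D n = Sn (C n) n - C n" for n
  have Dnf: "\<not> fullX n (D n)" for n
  proof
    assume "fullX n (D n)"
    then have "fullX (Suc (max n (beta (C n)))) (D n \<union> C n)"
      using full_union beta Cb by blast
    then have "fullX (beta (C n) + n + 2) (D n \<union> C n)" by (rule full_le) auto
    then have "fullX (beta (C n) + n + 2) (Sn (C n) n)" by (rule full_sub) (auto simp: D_def)
    then show False using Sn by blast
  qed
  have Cmono: "n \<le> m \<Longrightarrow> C n \<subseteq> C m" for n m
    by (rule lift_Suc_mono_le[of C]) (auto simp: CS)
  have DT: "D n \<subseteq> T" for n using Sn unfolding D_def by blast
  have disj: "n < m \<Longrightarrow> D n \<inter> D m = {}" for n m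
  proof -
    assume "n < m"
    then have "C (Suc n) \<subseteq> C m" using Cmono by simp
    moreover have "D n \<subseteq> C (Suc n)" by (auto simp: D_def CS)
    ultimately show ?thesis by (auto simp: D_def)
  qed
  define W1 where "W1 = (\<Union>n\<in>{n. even n}. D n)"
  define W2 where "W2 = (\<Union>n\<in>{n. odd n}. D n)"
  have W1T: "W1 \<subseteq> T" using DT by (auto simp: W1_def)
  have W2T: "W2 \<subseteq> T - W1"
  proof
    fix x assume "x \<in> W2"
    then obtain n where n: "odd n" "x \<in> D n" by (auto simp: W2_def)
    have "x \<notin> D n'" if "even n'" for n'
    proof -
      have "n \<noteq> n'" using n that by auto
      then show ?thesis using disj[of n n'] disj[of n' n] n by (auto simp: linorder_neq_iff)
    qed
    then show "x \<in> T - W1" using n DT by (auto simp: W1_def)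
  qed
  have "bndX W1 \<or> bndX W2" using Tsplit[OF W1T] bnd_sub W2T by blast
  then show False
  proof
    assume "bndX W1"
    then obtain m where m: "fullX m W1" unfolding bndX_def by blast
    have "D (2*m) \<subseteq> W1" unfolding W1_def by (rule UN_upper) simp
    then have "fullX m (D (2*m))" using full_sub m by blast
    then have "fullX (2*m) (D (2*m))" by (rule full_le) auto
    then show False using Dnf by blast
  next
    assume "bndX W2"
    then obtain m where m: "fullX m W2" unfolding bndX_def by blast
    have "D (2*m+1) \<subseteq> W2" unfolding W2_def by (rule UN_upper) simp
    then have "fullX m (D (2*m+1))" using full_sub m by blast
    then have "fullX (2*m+1) (D (2*m+1))" by (rule full_le) auto
    then show False using Dnf by blast
  qed
qed

lemma main: "\<exists>i. Xs i = UNIV"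
proof (rule ccontr)
  assume a: "\<not> (\<exists>i. Xs i = UNIV)"
  have nb: "\<not> bndX UNIV"
  proof
    assume "bndX UNIV"
    then obtain n where "fullX n UNIV" unfolding bndX_def by blast
    then have "Xs n = UNIV" unfolding fullX_def by auto
    then show False using a by blast
  qed
  show False
  proof (cases "\<exists>T. \<not> bndX T \<and> (\<forall>T1. T1 \<subseteq> T \<longrightarrow> bndX T1 \<or> bndX (T - T1))")
    case True
    then obtain T where "\<not> bndX T" "\<And>T1. T1 \<subseteq> T \<Longrightarrow> bndX T1 \<or> bndX (T - T1)" by blast
    then show False by (rule case1)
  next
    case False
    then have "\<And>T. \<not> bndX T \<Longrightarrow> \<exists>T1\<subseteq>T. \<not> bndX T1 \<and> \<not> bndX (T - T1)" by blast
    then show False using case2 nb by blast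
  qed
qed

end

theorem mainTheorem6:
  fixes Xs :: "nat \<Rightarrow> ('e \<Rightarrow> 'a::{ab_group_add, times, one, finite}) set"
  assumes "nonassoc_ring_1 TYPE('a)"
    and "\<And>i. Xs i \<subseteq> Xs (Suc i)"
    and "\<And>i. Rop (Xs i) \<subseteq> Xs (Suc i)"
    and "(\<Union>i. Xs i) = UNIV"
  shows "\<exists>i. Xs i = UNIV"
proof -
  interpret chn Xs using assms by unfold_locales
  show ?thesis by (rule main)
qed

end
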